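(* Let $G=(V,E,c_V^G,c_E^G)$ and $H=(V,E,c_V^H,c_E^H)$ be two capacitated graphs on the same graph $(V,E)$ that differ only in the capacity of one vertex $s$ (all other vertex capacities and all edge capacities coincide). Assume that in the executions of Rising-Tide on $G$ and on $H$ no two vertices become saturated simultaneously, and that the dependency graphs coincide, $D_G=D_H$. Let $\mu_G,\mu_H$ be the outputs of Rising-Tide on $G$ and $H$. Then \[\sum_i\left|\Big(c_V^G(i)-\sum_j\mu_G(i,j)\Big)-\Big(c_V^H(i)-\sum_j\mu_H(i,j)\Big)\right|\le|c_V^G(s)-c_V^H(s)|.\]
   Context: Capacitated graphs have nonnegative vertex capacities $c_V$ and edge capacities $c_E$; edges may include self-loops, and in $\sum_j\mu(i,j)$ a self-loop at $i$ counts once. A feasible fractional matching $\mu:E\to\mathbb{R}_{\ge0}$ satisfies $\mu(e)\le c_E(e)$ and $\sum_j\mu(i,j)\le c_V(i)$. Vertex $i$ is saturated if $\sum_j\mu(i,j)=c_V(i)$; edge $e$ is saturated if $\mu(e)=c_E(e)$. Rising-Tide: set $E'=\{e\in E:c_E(e)>0\}$ and $\mu\equiv0$; while $E'\ne\emptyset$: choose the maximum $\delta\ge0$ such that $\mu+\delta\mathbf{1}_{E'}$ is feasible, set $\mu\gets\mu+\delta\mathbf{1}_{E'}$, and remove from $E'$ every edge $(i,j)$ such that $i$, $j$, or $(i,j)$ is saturated; return $\mu$. Dependency graph $D_G$: the directed graph on $V$ which, for each edge $(i,j)\in E$, contains $j\to i$ if $i$ is saturated at the moment $(i,j)$ is removed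 from $E'$ in the execution on $G$, and contains $i\to j$ if $j$ is saturated at that moment. *)

theory Defs
  imports Complex_Main
begin

text \<open>Undirected edges are represented as sets of endpoints: a proper edge (i,j) is {i,j}
  (card 2) and a self-loop at i is {i} (card 1). The load of vertex i is the sum of mu over all edges containing i,
  so a self-loop at i counts once.\<close>

definition cap_graph :: "'a set \<Rightarrow> 'a set set \<Rightarrow> ('a \<Rightarrow> real) \<Rightarrow> ('a set \<Rightarrow> real) \<Rightarrow> bool" where
  "cap_graph V E cV cE \<longleftrightarrow> finite V \<and> (\<forall>e\<in>E. e \<subseteq> V \<and> (card e = 1 \<or> card e = 2))
     \<and> (\<forall>i\<in>V. 0 \<le> cV i) \<and> (\<forall>e\<in>E. 0 \<le> cE e)"

definition load :: "'a set set \<Rightarrow> ('a set \<Rightarrow> real) \<Rightarrow> 'a \<Rightarrow> real" where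
  "load E mu i = (\<Sum>e\<in>{e\<in>E. i \<in> e}. mu e)"

definition feasible :: "'a set \<Rightarrow> 'a set set \<Rightarrow> ('a \<Rightarrow> real) \<Rightarrow> ('a set \<Rightarrow> real) \<Rightarrow> ('a set \<Rightarrow> real) \<Rightarrow> bool" where
  "feasible V E cV cE mu \<longleftrightarrow> (\<forall>e\<in>E. 0 \<le> mu e \<and> mu e \<le> cE e) \<and> (\<forall>i\<in>V. load E mu i \<le> cV i)"

definition vsat :: "'a set set \<Rightarrow> ('a \<Rightarrow> real) \<Rightarrow> ('a set \<Rightarrow> real) \<Rightarrow> 'a \<Rightarrow> bool" where
  "vsat E cV mu i \<longleftrightarrow> load E mu i = cV i"

definition esat :: "('a set \<Rightarrow> real) \<Rightarrow> ('a set \<Rightarrow> real) \<Rightarrow> 'a set \<Rightarrow> bool" where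
  "esat cE mu e \<longleftrightarrow> mu e = cE e"

definition rt_step :: "'a set \<Rightarrow> 'a set set \<Rightarrow> ('a \<Rightarrow> real) \<Rightarrow> ('a set \<Rightarrow> real)
    \<Rightarrow> ('a set \<Rightarrow> real) \<times> 'a set set \<Rightarrow> ('a set \<Rightarrow> real) \<times> 'a set set" where
  "rt_step V E cV cE st =
     (let mu = fst st; F = snd st in
      if F = {} then st else
      let d = (GREATEST d::real. 0 \<le> d \<and>
                 feasible V E cV cE (\<lambda>e. mu e + (if e \<in> F then d else 0)));
          mu' = (\<lambda>e. mu e + (if e \<in> F then d else 0));
          F' = {e\<in>F. \<not> esat cE mu' e \<and> (\<forall>i\<in>e. \<not> vsat E cV mu' i)}
      in (mu', F'))"

definition rt_state :: "'a set \<Rightarrow> 'a set set \<Rightarrow> ('a \<Rightarrow> real) \<Rightarrow> ('a set \<Rightarrow> real)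
    \<Rightarrow> nat \<Rightarrow> ('a set \<Rightarrow> real) \<times> 'a set set" where
  "rt_state V E cV cE k = (rt_step V E cV cE ^^ k) (\<lambda>_. 0, {e\<in>E. 0 < cE e})"

definition rising_tide :: "'a set \<Rightarrow> 'a set set \<Rightarrow> ('a \<Rightarrow> real) \<Rightarrow> ('a set \<Rightarrow> real) \<Rightarrow> ('a set \<Rightarrow> real)" where
  "rising_tide V E cV cE =
     fst (rt_state V E cV cE (LEAST k. snd (rt_state V E cV cE k) = {}))"

definition no_simul_sat :: "'a set \<Rightarrow> 'a set set \<Rightarrow> ('a \<Rightarrow> real) \<Rightarrow> ('a set \<Rightarrow> real) \<Rightarrow> bool" where
  "no_simul_sat V E cV cE \<longleftrightarrow>
     (\<forall>k. card {i\<in>V. vsat E cV (fst (rt_state V E cV cE (Suc k))) i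
                    \<and> \<not> vsat E cV (fst (rt_state V E cV cE k)) i} \<le> 1)"

text \<open>Dependency graph: arc (j,i) (i.e. j \<rightarrow> i) for an edge {i,j} removed from E' in
  iteration k with i saturated right after that iteration.\<close>
definition dep_graph :: "'a set \<Rightarrow> 'a set set \<Rightarrow> ('a \<Rightarrow> real) \<Rightarrow> ('a set \<Rightarrow> real) \<Rightarrow> ('a \<times> 'a) set" where
  "dep_graph V E cV cE =
     {(j, i) | i j k. {i, j} \<in> E \<and> {i, j} \<in> snd (rt_state V E cV cE k)
        \<and> {i, j} \<notin> snd (rt_state V E cV cE (Suc k))
        \<and> vsat E cV (fst (rt_state V E cV cE (Suc k))) i}"

end

theory Submission
  imports Defs
begin


lemma cap_finE: "cap_graph V E cV cE \<Longrightarrow> finite E"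
  unfolding cap_graph_def
  by (meson Pow_iff finite_Pow_iff finite_subset subsetI)

lemma load_add:
  assumes "finite E"
  shows "load E (\<lambda>e. mu e + (if e \<in> F then x else 0)) i
     = load E mu i + x * real (card ({e\<in>E. i\<in>e} \<inter> F))"
proof -
  have "(\<Sum>e\<in>{e\<in>E. i\<in>e}. (if e \<in> F then x else 0)) = (\<Sum>e\<in>{e\<in>E. i\<in>e} \<inter> F. x)"
    using assms sum.inter_restrict[of "{e\<in>E. i\<in>e}" "\<lambda>_. x" F] by simp
  also have "\<dots> = x * real (card ({e\<in>E. i\<in>e} \<inter> F))" by simp
  finally show ?thesis unfolding load_def by (simp add: sum.distrib)
qed

lemma greatest_step:
  fixes mu :: "'a set \<Rightarrow> real"
  assumes cg: "cap_graph V E cV cE" and feas: "feasible V E cV cE mu" and FE: "F \<subseteq> E" and Fne: "F \<noteq> {}"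
  defines "d \<equiv> (GREATEST d::real. 0 \<le> d \<and> feasible V E cV cE (\<lambda>e. mu e + (if e \<in> F then d else 0)))"
  shows "0 \<le> d" "feasible V E cV cE (\<lambda>e. mu e + (if e \<in> F then d else 0))"
    "\<exists>e\<in>F. esat cE (\<lambda>e. mu e + (if e \<in> F then d else 0)) e \<or> (\<exists>i\<in>e. vsat E cV (\<lambda>e. mu e + (if e \<in> F then d else 0)) i)"
proof -
  have fE: "finite E" using cap_finE[OF cg] .
  have fV: "finite V" using cg by (simp add: cap_graph_def)
  define n where "n i = card ({e\<in>E. i\<in>e} \<inter> F)" for i
  have ld: "load E (\<lambda>e. mu e + (if e \<in> F then x else 0)) i = load E mu i + x * real (n i)" for x i
    using load_add[OF fE] n_def by simp
  define C where "C = (\<lambda>e. cE e - mu e) ` F \<union> (\<lambda>i. (cV i - load E mu i) / real (n i)) ` {i\<in>V. 0 < n i}"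
  have fF: "finite F" using fE FE finite_subset by blast
  have fC: "finite C" unfolding C_def using fF fV by simp
  have neC: "C \<noteq> {}" unfolding C_def using Fne by simp
  have mu0: "\<forall>e\<in>E. 0 \<le> mu e \<and> mu e \<le> cE e" and lV: "\<forall>i\<in>V. load E mu i \<le> cV i"
    using feas by (auto simp: feasible_def)
  have char: "feasible V E cV cE (\<lambda>e. mu e + (if e \<in> F then x else 0)) \<longleftrightarrow> (\<forall>c\<in>C. x \<le> c)"
    if x0: "0 \<le> x" for x
  proof
    assume f: "feasible V E cV cE (\<lambda>e. mu e + (if e \<in> F then x else 0))"
    show "\<forall>c\<in>C. x \<le> c"
    proof
      fix c assume "c \<in> C"
      then consider (e) e where "e \<in> F" "c = cE e - mu e" | (v) i where "i \<in> V" "0 < n i" "c = (cV i - load E mu i) / real (n i)"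
        unfolding C_def by blast
      then show "x \<le> c"
      proof cases
        case e
        then show ?thesis using f FE unfolding feasible_def by force
      next
        case v
        have "load E mu i + x * real (n i) \<le> cV i" using f v ld unfolding feasible_def by metis
        then show ?thesis using v by (simp add: pos_le_divide_eq)
      qed
    qed
  next
    assume h: "\<forall>c\<in>C. x \<le> c"
    show "feasible V E cV cE (\<lambda>e. mu e + (if e \<in> F then x else 0))"
      unfolding feasible_def
    proof (intro conjI ballI)
      fix e assume e: "e \<in> E"
      show "0 \<le> mu e + (if e \<in> F then x else 0)" using mu0 e x0 by simp
      show "mu e + (if e \<in> F then x else 0) \<le> cE e"
      proof (cases "e \<in> F")
        case True
        then have "x \<le> cE e - mu e" using h unfolding C_def by blast
        then show ?thesis using True by simp
      qed (use mu0 e in simp)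
    next
      fix i assume i: "i \<in> V"
      show "load E (\<lambda>e. mu e + (if e \<in> F then x else 0)) i \<le> cV i"
      proof (cases "0 < n i")
        case True
        then have "x \<le> (cV i - load E mu i) / real (n i)" using h i unfolding C_def by blast
        then have "x * real (n i) \<le> cV i - load E mu i" using True by (simp add: pos_le_divide_eq)
        then show ?thesis using ld by simp
      next
        case False
        then show ?thesis using ld lV i by simp
      qed
    qed
  qed
  define dm where "dm = Min C"
  have Cpos: "\<forall>c\<in>C. 0 \<le> c"
  proof
    fix c assume "c \<in> C"
    then consider (e) e where "e \<in> F" "c = cE e - mu e" | (v) i where "i \<in> V" "0 < n i" "c = (cV i - load E mu i) / real (n i)"
      unfolding C_def by blast
    then show "0 \<le> c"
    proof cases
      case e then show ?thesis using mu0 FE by force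
    next
      case v then show ?thesis using lV by simp
    qed
  qed
  have dm0: "0 \<le> dm" unfolding dm_def using fC neC Cpos by simp
  have dmle: "\<forall>c\<in>C. dm \<le> c" unfolding dm_def using fC by simp
  have dd: "d = dm" unfolding d_def
  proof (rule Greatest_equality)
    show "0 \<le> dm \<and> feasible V E cV cE (\<lambda>e. mu e + (if e \<in> F then dm else 0))"
      using dm0 dmle char by blast
    fix y assume "0 \<le> y \<and> feasible V E cV cE (\<lambda>e. mu e + (if e \<in> F then y else 0))"
    then have "\<forall>c\<in>C. y \<le> c" using char by blast
    then show "y \<le> dm" unfolding dm_def using fC neC by simp
  qed
  show "0 \<le> d" using dd dm0 by simp
  show "feasible V E cV cE (\<lambda>e. mu e + (if e \<in> F then d else 0))"
    using dd dm0 dmle char by blast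
  have "dm \<in> C" unfolding dm_def using fC neC by simp
  then consider (e) e where "e \<in> F" "dm = cE e - mu e" | (v) i where "i \<in> V" "0 < n i" "dm = (cV i - load E mu i) / real (n i)"
    unfolding C_def by blast
  then show "\<exists>e\<in>F. esat cE (\<lambda>e. mu e + (if e \<in> F then d else 0)) e \<or> (\<exists>i\<in>e. vsat E cV (\<lambda>e. mu e + (if e \<in> F then d else 0)) i)"
  proof cases
    case e then show ?thesis using dd by (intro bexI[of _ e]) (auto simp: esat_def)
  next
    case v
    have "vsat E cV (\<lambda>e. mu e + (if e \<in> F then d else 0)) i"
      unfolding vsat_def using ld[of d i] v dd by simp
    moreover obtain e where "e \<in> {e\<in>E. i\<in>e} \<inter> F" using v(2) unfolding n_def
      by (metis card.empty emptyE less_irrefl equals0I)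
    ultimately show ?thesis by blast
  qed
qed


context
  fixes V :: "'a set" and E :: "'a set set" and cV :: "'a \<Rightarrow> real" and cE :: "'a set \<Rightarrow> real"
  assumes cg: "cap_graph V E cV cE"
begin

abbreviation "MU k \<equiv> fst (rt_state V E cV cE k)"
abbreviation "FF k \<equiv> snd (rt_state V E cV cE k)"

lemma st_Suc: "rt_state V E cV cE (Suc k) = rt_step V E cV cE (rt_state V E cV cE k)"
  by (simp add: rt_state_def)

lemma MU0: "MU 0 = (\<lambda>_. 0)" and FF0: "FF 0 = {e\<in>E. 0 < cE e}"
  by (simp_all add: rt_state_def)

lemma FF_Suc: "FF k \<noteq> {} \<Longrightarrow> FF (Suc k) = {e\<in>FF k. \<not> esat cE (MU (Suc k)) e \<and> (\<forall>i\<in>e. \<not> vsat E cV (MU (Suc k)) i)}"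
  unfolding st_Suc by (simp add: rt_step_def Let_def)

lemma FF_empty: "FF k = {} \<Longrightarrow> rt_state V E cV cE (Suc k) = rt_state V E cV cE k"
  unfolding st_Suc by (simp add: rt_step_def)

lemma MU_Suc_eq: "FF k \<noteq> {} \<Longrightarrow> MU (Suc k) = (\<lambda>e. MU k e + (if e \<in> FF k then
   (GREATEST d::real. 0 \<le> d \<and> feasible V E cV cE (\<lambda>e. MU k e + (if e \<in> FF k then d else 0))) else 0))"
  unfolding st_Suc by (simp add: rt_step_def Let_def)

lemma FF_Suc_sub: "FF (Suc k) \<subseteq> FF k"
  by (cases "FF k = {}") (simp_all add: FF_empty FF_Suc)

lemma FF_anti: "k \<le> m \<Longrightarrow> FF m \<subseteq> FF k"
  using lift_Suc_antimono_le[of FF] FF_Suc_sub by blast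

lemma inv: "feasible V E cV cE (MU k) \<and> FF k \<subseteq> E \<and> (\<forall>e\<in>FF k. \<forall>e'\<in>FF k. MU k e = MU k e')"
proof (induction k)
  case 0
  have "feasible V E cV cE (\<lambda>_. 0)"
    using cg unfolding feasible_def load_def cap_graph_def by simp
  moreover have "FF 0 \<subseteq> E" unfolding FF0 by blast
  moreover have "\<forall>e\<in>FF 0. \<forall>e'\<in>FF 0. MU 0 e = MU 0 e'" unfolding MU0 by simp
  ultimately show ?case unfolding MU0 by blast
next
  case (Suc k)
  have f: "feasible V E cV cE (MU k)" and s: "FF k \<subseteq> E" and q: "\<forall>e\<in>FF k. \<forall>e'\<in>FF k. MU k e = MU k e'"
    using Suc.IH by blast+
  show ?case
  proof (cases "FF k = {}")
    case True
    then show ?thesis using Suc.IH FF_empty[OF True] by simp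
  next
    case False
    have g: "feasible V E cV cE (MU (Suc k))"
      unfolding MU_Suc_eq[OF False] by (rule greatest_step(2)[OF cg f s False])
    moreover have "FF (Suc k) \<subseteq> E" using s FF_Suc_sub[of k] by (meson subset_trans)
    moreover have "\<forall>e\<in>FF (Suc k). \<forall>e'\<in>FF (Suc k). MU (Suc k) e = MU (Suc k) e'"
    proof (intro ballI)
      fix e e' assume "e \<in> FF (Suc k)" "e' \<in> FF (Suc k)"
      then have ee: "e \<in> FF k" "e' \<in> FF k" using FF_Suc_sub[of k] by blast+
      then have "MU k e = MU k e'" using q by blast
      then show "MU (Suc k) e = MU (Suc k) e'" unfolding MU_Suc_eq[OF False] using ee by simp
    qed
    ultimately show ?thesis by blast
  qed
qed

lemma inv_feas: "feasible V E cV cE (MU k)" using inv by blast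
lemma inv_sub: "FF k \<subseteq> E" using inv by blast
lemma inv_eq: "e \<in> FF k \<Longrightarrow> e' \<in> FF k \<Longrightarrow> MU k e = MU k e'" using inv by blast

lemma MU_Suc: "\<exists>d\<ge>0. MU (Suc k) = (\<lambda>e. MU k e + (if e \<in> FF k then d else 0))"
proof (cases "FF k = {}")
  case True
  then show ?thesis using FF_empty by (intro exI[of _ 0]) simp
next
  case False
  have f: "feasible V E cV cE (MU k)" and s: "FF k \<subseteq> E" using inv_feas[of k] inv_sub[of k] by blast+
  show ?thesis unfolding MU_Suc_eq[OF False] using greatest_step(1)[OF cg f s False] by blast
qed

lemma FF_strict: "FF k \<noteq> {} \<Longrightarrow> FF (Suc k) \<subset> FF k"
proof -
  assume ne: "FF k \<noteq> {}"
  have "\<exists>e\<in>FF k. esat cE (MU (Suc k)) e \<or> (\<exists>i\<in>e. vsat E cV (MU (Suc k)) i)"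
    unfolding MU_Suc_eq[OF ne] by (rule greatest_step(3)[OF cg _ _ ne]) (use inv_feas[of k] inv_sub[of k] in blast)+
  then show ?thesis using FF_Suc[OF ne] by blast
qed

lemma MU_mono_Suc: "MU k e \<le> MU (Suc k) e"
  using MU_Suc[of k] by auto

lemma freeze: "k \<le> m \<Longrightarrow> e \<notin> FF k \<Longrightarrow> MU m e = MU k e"
proof (induction m rule: dec_induct)
  case base then show ?case by simp
next
  case (step m)
  have "e \<notin> FF m" using FF_anti[OF step(1)] step(4) by blast
  then show ?case using MU_Suc[of m] step by auto
qed

lemma vsat_persist: "k \<le> m \<Longrightarrow> i \<in> V \<Longrightarrow> vsat E cV (MU k) i \<Longrightarrow> vsat E cV (MU m) i"
proof (induction m rule: dec_induct)
  case base then show ?case by simp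
next
  case (step m)
  have "load E (MU m) i \<le> load E (MU (Suc m)) i"
    unfolding load_def by (rule sum_mono) (rule MU_mono_Suc)
  moreover have "load E (MU (Suc m)) i \<le> cV i" using inv_feas[of "Suc m"] step(4) by (simp add: feasible_def)
  ultimately show ?case using step by (simp add: vsat_def)
qed

lemma card_bound: "FF k \<noteq> {} \<Longrightarrow> card (FF k) + k \<le> card (FF 0)"
proof (induction k)
  case 0 show ?case by simp
next
  case (Suc k)
  have ne: "FF k \<noteq> {}" using Suc.prems FF_Suc_sub[of k] by blast
  have fin: "finite (FF k)" using inv_sub[of k] cap_finE[OF cg] finite_subset by blast
  have "card (FF (Suc k)) < card (FF k)" by (rule psubset_card_mono[OF fin FF_strict[OF ne]])
  then show ?case using Suc.IH[OF ne] by simp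
qed

lemma terminates: "\<exists>k. FF k = {}"
  using card_bound[of "Suc (card (FF 0))"] by auto

definition NN where "NN = (LEAST k. FF k = {})"

lemma FF_NN: "FF NN = {}"
  unfolding NN_def by (rule LeastI_ex[OF terminates])

lemma RT: "rising_tide V E cV cE = MU NN"
  unfolding rising_tide_def NN_def ..

lemma before_NN: "e \<in> FF r \<Longrightarrow> r < NN"
proof (rule ccontr)
  assume "e \<in> FF r" "\<not> r < NN"
  then have "FF r \<subseteq> FF NN" using FF_anti[of NN r] by simp
  then show False using FF_NN \<open>e \<in> FF r\<close> by blast
qed

lemma edge_pair: "e \<in> E \<Longrightarrow> i \<in> e \<Longrightarrow> \<exists>j. e = {i,j}"
proof -
  assume e: "e \<in> E" and i: "i \<in> e"
  have "card e = 1 \<or> card e = 2" using cg e unfolding cap_graph_def by blast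
  then show ?thesis
  proof
    assume "card e = 1"
    then obtain x where "e = {x}" using card_1_singletonE by blast
    then show ?thesis using i by (intro exI[of _ i]) simp
  next
    assume "card e = 2"
    then obtain x y where xy: "e = {x,y}" unfolding card_2_iff by blast
    show ?thesis
    proof (cases "i = x")
      case True then show ?thesis using xy by (intro exI[of _ y]) simp
    next
      case False then have "i = y" using xy i by simp
      then show ?thesis using xy by (intro exI[of _ x]) (simp add: insert_commute)
    qed
  qed
qed

lemma dep_D: "(j,i) \<in> dep_graph V E cV cE \<Longrightarrow>
   \<exists>k. {i,j} \<in> E \<and> {i,j} \<in> FF k \<and> {i,j} \<notin> FF (Suc k) \<and> vsat E cV (MU (Suc k)) i"
  unfolding dep_graph_def by simp

lemma dep_I: "{i,j} \<in> E \<Longrightarrow> {i,j} \<in> FF k \<Longrightarrow> {i,j} \<notin> FF (Suc k) \<Longrightarrow> vsat E cV (MU (Suc k)) i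
   \<Longrightarrow> (j,i) \<in> dep_graph V E cV cE"
  unfolding dep_graph_def by auto

lemma P1:
  assumes e: "e \<in> E" and noA: "\<forall>i j. e = {i,j} \<longrightarrow> (j,i) \<notin> dep_graph V E cV cE"
  shows "MU NN e = (if 0 < cE e then cE e else 0)"
proof (cases "0 < cE e")
  case False
  have "e \<notin> FF 0" using False FF0 by simp
  then have "MU NN e = MU 0 e" using freeze[of 0 NN e] by simp
  then show ?thesis using False MU0 by simp
next
  case True
  then have e0: "e \<in> FF 0" using e FF0 by simp
  have ex: "\<exists>k. e \<notin> FF k" using FF_NN by blast
  define k where "k = (LEAST k. e \<notin> FF k)"
  have k1: "e \<notin> FF k" unfolding k_def using LeastI_ex[OF ex] .
  have "k \<noteq> 0"
  proof
    assume "k = 0"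
    with k1 e0 show False by simp
  qed
  then obtain r where kr: "k = Suc r" by (cases k) auto
  have er: "e \<in> FF r" using not_less_Least[of r "\<lambda>k. e \<notin> FF k"] kr k_def by auto
  have ne: "FF r \<noteq> {}" using er by blast
  have k1': "e \<notin> FF (Suc r)" using k1 kr by simp
  have "\<not> (\<not> esat cE (MU (Suc r)) e \<and> (\<forall>i\<in>e. \<not> vsat E cV (MU (Suc r)) i))"
    using FF_Suc[OF ne] er k1' by blast
  moreover have "\<not> vsat E cV (MU (Suc r)) i" if ie: "i \<in> e" for i
  proof
    assume vs: "vsat E cV (MU (Suc r)) i"
    obtain j where eij: "e = {i,j}" using edge_pair[OF e ie] by blast
    then have "(j,i) \<in> dep_graph V E cV cE" using dep_I e er k1' vs by blast
    then show False using noA eij by blast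
  qed
  ultimately have "esat cE (MU (Suc r)) e" by blast
  moreover have "MU NN e = MU (Suc r) e" using freeze[of "Suc r" NN e] k1' before_NN[OF er] by simp
  ultimately show ?thesis using True by (simp add: esat_def)
qed

lemma not_later:
  assumes "e \<in> FF r" "vsat E cV (MU (Suc r)) i" "i \<in> e'" "e' \<in> FF r'"
  shows "\<not> r < r'"
proof
  assume "r < r'"
  then have "e' \<in> FF (Suc r)" using FF_anti[of "Suc r" r'] assms(4) by auto
  moreover have "FF r \<noteq> {}" using assms(1) by blast
  ultimately have "\<forall>x\<in>e'. \<not> vsat E cV (MU (Suc r)) x" using FF_Suc by blast
  then show False using assms by blast
qed

lemma P2:
  assumes "(a,i) \<in> dep_graph V E cV cE" "(b,i) \<in> dep_graph V E cV cE"
  shows "MU NN {i,a} = MU NN {i,b}"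
proof -
  obtain r where r: "{i,a} \<in> FF r" "{i,a} \<notin> FF (Suc r)" "vsat E cV (MU (Suc r)) i"
    using dep_D[OF assms(1)] by blast
  obtain r' where r': "{i,b} \<in> FF r'" "{i,b} \<notin> FF (Suc r')" "vsat E cV (MU (Suc r')) i"
    using dep_D[OF assms(2)] by blast
  have "\<not> r < r'" using not_later[OF r(1) r(3) _ r'(1)] by simp
  moreover have "\<not> r' < r" using not_later[OF r'(1) r'(3) _ r(1)] by simp
  ultimately have rr: "r' = r" by simp
  have ne: "FF r \<noteq> {}" using r by blast
  have eq: "MU r {i,a} = MU r {i,b}" using inv_eq r(1) r'(1) rr by blast
  have "MU (Suc r) {i,a} = MU (Suc r) {i,b}" unfolding MU_Suc_eq[OF ne] using r(1) r'(1) rr eq by simp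
  moreover have "MU NN {i,a} = MU (Suc r) {i,a}" using freeze[of "Suc r" NN] r before_NN[OF r(1)] by simp
  moreover have "MU NN {i,b} = MU (Suc r) {i,b}" using freeze[of "Suc r" NN] r' rr before_NN[OF r(1)] by simp
  ultimately show ?thesis by simp
qed

lemma P3:
  assumes "(a,i) \<in> dep_graph V E cV cE" "i \<in> V"
  shows "load E (MU NN) i = cV i"
proof -
  obtain r where r: "{i,a} \<in> FF r" "vsat E cV (MU (Suc r)) i"
    using dep_D[OF assms(1)] by blast
  have "vsat E cV (MU NN) i" using vsat_persist[OF _ assms(2) r(2)] before_NN[OF r(1)] by simp
  then show ?thesis by (simp add: vsat_def)
qed

end



lemma comb:
  fixes V :: "'a set" and E :: "'a set set" and A :: "'a \<Rightarrow> 'a set set"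
    and muG muH :: "'a set \<Rightarrow> real" and cG cH :: "'a \<Rightarrow> real"
  assumes fV: "finite V" and EV: "\<forall>e\<in>E. e \<subseteq> V \<and> (card e = 1 \<or> card e = 2)"
    and AE: "\<forall>i. A i \<subseteq> {e\<in>E. i \<in> e}"
    and P1: "\<forall>e\<in>E. (\<forall>i\<in>V. e \<notin> A i) \<longrightarrow> muG e = muH e"
    and P2: "\<forall>i\<in>V. \<forall>e\<in>A i. \<forall>e'\<in>A i. muH e - muG e = muH e' - muG e'"
    and P3: "\<forall>i\<in>V. A i \<noteq> {} \<longrightarrow> load E muG i = cG i \<and> load E muH i = cH i"
  shows "(\<Sum>i\<in>V. \<bar>(cG i - load E muG i) - (cH i - load E muH i)\<bar>) \<le> (\<Sum>i\<in>V. \<bar>cG i - cH i\<bar>)"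
proof -
  have fE: "finite E"
    using EV fV by (meson Pow_iff finite_Pow_iff finite_subset subsetI)
  define \<delta> where "\<delta> e = muH e - muG e" for e
  define D where "D i = cH i - cG i" for i
  define Ei where "Ei i = {e\<in>E. i\<in>e}" for i
  define Oi where "Oi i = {e\<in>E. i\<in>e \<and> e \<notin> A i}" for i
  define B where "B i = (\<Sum>e\<in>Oi i. \<bar>\<delta> e\<bar>)" for i
  define T where "T i = (\<Sum>e\<in>A i. \<bar>\<delta> e\<bar>)" for i
  have fEi: "finite (Ei i)" for i unfolding Ei_def using fE by simp
  have fA: "finite (A i)" for i
  proof -
    have "A i \<subseteq> E" using AE by blast
    then show ?thesis using fE by (rule finite_subset)
  qed
  have fO: "finite (Oi i)" for i unfolding Oi_def using fE by simp
  have ld: "load E muH i - load E muG i = (\<Sum>e\<in>Ei i. \<delta> e)" for i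
    unfolding load_def Ei_def \<delta>_def by (simp add: sum_subtractf)
  have split: "(\<Sum>e\<in>Ei i. \<delta> e) = (\<Sum>e\<in>A i. \<delta> e) + (\<Sum>e\<in>Oi i. \<delta> e)" for i
  proof -
    have "Ei i = A i \<union> Oi i" unfolding Ei_def Oi_def using AE by auto
    moreover have "A i \<inter> Oi i = {}" unfolding Oi_def by auto
    ultimately show ?thesis using fA fO by (simp add: sum.union_disjoint)
  qed
  have absum: "\<bar>\<Sum>e\<in>X. \<delta> e\<bar> \<le> (\<Sum>e\<in>X. \<bar>\<delta> e\<bar>)" for X by (rule sum_abs)
  have c1: "\<bar>(cG i - load E muG i) - (cH i - load E muH i)\<bar> + T i \<le> \<bar>D i\<bar> + B i" if iV: "i \<in> V" for i
  proof (cases "A i = {}")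
    case True
    have "Oi i = Ei i" unfolding Oi_def Ei_def using True by simp
    have "\<bar>(cG i - load E muG i) - (cH i - load E muH i)\<bar> = \<bar>(\<Sum>e\<in>Ei i. \<delta> e) - D i\<bar>"
      using ld[of i] unfolding D_def by (simp add: algebra_simps)
    also have "\<dots> \<le> \<bar>\<Sum>e\<in>Ei i. \<delta> e\<bar> + \<bar>D i\<bar>" by (rule abs_triangle_ineq4)
    also have "\<dots> \<le> B i + \<bar>D i\<bar>" unfolding B_def \<open>Oi i = Ei i\<close> using absum by simp
    finally show ?thesis unfolding T_def using True by simp
  next
    case False
    have l: "load E muG i = cG i" "load E muH i = cH i" using P3 iV False by auto
    obtain e0 where e0: "e0 \<in> A i" using False by blast
    have const: "\<delta> e = \<delta> e0" if "e \<in> A i" for e using P2 iV e0 that unfolding \<delta>_def by blast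
    have "T i = (\<Sum>e\<in>A i. \<bar>\<delta> e0\<bar>)" unfolding T_def using const by simp
    also have "\<dots> = \<bar>\<Sum>e\<in>A i. \<delta> e0\<bar>" by (simp add: abs_mult)
    also have "\<dots> = \<bar>\<Sum>e\<in>A i. \<delta> e\<bar>" using const by simp
    also have "(\<Sum>e\<in>A i. \<delta> e) = D i - (\<Sum>e\<in>Oi i. \<delta> e)"
      using ld[of i] split[of i] l unfolding D_def by simp
    finally have "T i \<le> \<bar>D i\<bar> + B i" unfolding B_def using absum[of "Oi i"] by linarith
    then show ?thesis using l by simp
  qed
  have edge: "(\<Sum>i\<in>V. if i \<in> e \<and> e \<notin> A i then \<bar>\<delta> e\<bar> else 0) \<le> (\<Sum>i\<in>V. if e \<in> A i then \<bar>\<delta> e\<bar> else 0)"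
    if e: "e \<in> E" for e
  proof (cases "\<forall>i\<in>V. e \<notin> A i")
    case True
    then have d0: "\<delta> e = 0" using P1 e unfolding \<delta>_def by simp
    show ?thesis unfolding d0 abs_zero if_cancel sum.neutral_const by simp
  next
    case False
    then obtain j where j: "j \<in> V" "e \<in> A j" by blast
    have je: "j \<in> e" using AE j by blast
    have fe: "finite e" using EV e fV finite_subset by blast
    have "(\<Sum>i\<in>V. if i \<in> e \<and> e \<notin> A i then \<bar>\<delta> e\<bar> else 0) = (\<Sum>i\<in>{i\<in>V. i \<in> e \<and> e \<notin> A i}. \<bar>\<delta> e\<bar>)"
      using sum.inter_filter[OF fV, of "\<lambda>_. \<bar>\<delta> e\<bar>" "\<lambda>i. i \<in> e \<and> e \<notin> A i"] by simp
    also have "\<dots> = real (card {i\<in>V. i \<in> e \<and> e \<notin> A i}) * \<bar>\<delta> e\<bar>" by simp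
    also have "\<dots> \<le> 1 * \<bar>\<delta> e\<bar>"
    proof (rule mult_right_mono)
      have "{i\<in>V. i \<in> e \<and> e \<notin> A i} \<subseteq> e - {j}" using j by auto
      then have "card {i\<in>V. i \<in> e \<and> e \<notin> A i} \<le> card (e - {j})" using fe by (simp add: card_mono)
      also have "\<dots> = card e - 1" using je fe by simp
      also have "\<dots> \<le> 1" using EV e by auto
      finally show "real (card {i\<in>V. i \<in> e \<and> e \<notin> A i}) \<le> 1" by simp
    qed simp
    also have "\<dots> = (if e \<in> A j then \<bar>\<delta> e\<bar> else 0)" using j by simp
    also have "\<dots> \<le> (\<Sum>i\<in>V. if e \<in> A i then \<bar>\<delta> e\<bar> else 0)"
      by (rule member_le_sum[OF j(1)]) (auto simp: fV)
    finally show ?thesis .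
  qed
  have c2: "(\<Sum>i\<in>V. B i) \<le> (\<Sum>i\<in>V. T i)"
  proof -
    have "(\<Sum>i\<in>V. B i) = (\<Sum>i\<in>V. \<Sum>e\<in>E. if i \<in> e \<and> e \<notin> A i then \<bar>\<delta> e\<bar> else 0)"
      unfolding B_def Oi_def using fE by (simp add: sum.inter_filter)
    also have "\<dots> = (\<Sum>e\<in>E. \<Sum>i\<in>V. if i \<in> e \<and> e \<notin> A i then \<bar>\<delta> e\<bar> else 0)" by (rule sum.swap)
    also have "\<dots> \<le> (\<Sum>e\<in>E. \<Sum>i\<in>V. if e \<in> A i then \<bar>\<delta> e\<bar> else 0)" by (rule sum_mono) (rule edge)
    also have "\<dots> = (\<Sum>i\<in>V. \<Sum>e\<in>E. if e \<in> A i then \<bar>\<delta> e\<bar> else 0)" by (rule sum.swap)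
    also have "\<dots> = (\<Sum>i\<in>V. T i)"
    proof (rule sum.cong[OF refl])
      fix i
      have "A i = {e\<in>E. e \<in> A i}" using AE by auto
      then show "(\<Sum>e\<in>E. if e \<in> A i then \<bar>\<delta> e\<bar> else 0) = T i"
        unfolding T_def using sum.inter_filter[OF fE, of "\<lambda>e. \<bar>\<delta> e\<bar>" "\<lambda>e. e \<in> A i"] by simp
    qed
    finally show ?thesis .
  qed
  have "(\<Sum>i\<in>V. \<bar>(cG i - load E muG i) - (cH i - load E muH i)\<bar>) + (\<Sum>i\<in>V. T i)
      \<le> (\<Sum>i\<in>V. \<bar>D i\<bar>) + (\<Sum>i\<in>V. B i)"
    using sum_mono[of V "\<lambda>i. \<bar>(cG i - load E muG i) - (cH i - load E muH i)\<bar> + T i" "\<lambda>i. \<bar>D i\<bar> + B i"] c1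
    by (simp add: sum.distrib)
  then show ?thesis using c2 unfolding D_def by (simp add: abs_minus_commute)
qed


theorem lemma23:
  fixes V :: "'a set" and E :: "'a set set" and cVG cVH :: "'a \<Rightarrow> real"
    and cE :: "'a set \<Rightarrow> real" and s :: 'a
  assumes "cap_graph V E cVG cE" and "cap_graph V E cVH cE"
    and "\<forall>i\<in>V. i \<noteq> s \<longrightarrow> cVG i = cVH i"
    and "no_simul_sat V E cVG cE" and "no_simul_sat V E cVH cE"
    and "dep_graph V E cVG cE = dep_graph V E cVH cE"
  shows "(\<Sum>i\<in>V. \<bar>(cVG i - load E (rising_tide V E cVG cE) i)
                    - (cVH i - load E (rising_tide V E cVH cE) i)\<bar>) \<le> \<bar>cVG s - cVH s\<bar>"
proof -
  note cgG = assms(1) and cgH = assms(2) and DD = assms(6)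
  define D where "D = dep_graph V E cVG cE"
  have DH: "dep_graph V E cVH cE = D" using DD D_def by simp
  define A where "A i = {e\<in>E. \<exists>j. e = {i,j} \<and> (j,i) \<in> D}" for i
  define muG where "muG = rising_tide V E cVG cE"
  define muH where "muH = rising_tide V E cVH cE"
  have muG': "muG = fst (rt_state V E cVG cE (NN V E cVG cE))" unfolding muG_def by (rule RT[OF cgG])
  have muH': "muH = fst (rt_state V E cVH cE (NN V E cVH cE))" unfolding muH_def by (rule RT[OF cgH])
  have fV: "finite V" using cgG by (simp add: cap_graph_def)
  have EV: "\<forall>e\<in>E. e \<subseteq> V \<and> (card e = 1 \<or> card e = 2)" using cgG by (simp add: cap_graph_def)
  have AE: "\<forall>i. A i \<subseteq> {e\<in>E. i \<in> e}" unfolding A_def by auto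
  have Q1: "\<forall>e\<in>E. (\<forall>i\<in>V. e \<notin> A i) \<longrightarrow> muG e = muH e"
  proof (intro ballI impI)
    fix e assume e: "e \<in> E" and nA: "\<forall>i\<in>V. e \<notin> A i"
    have no: "\<forall>i j. e = {i,j} \<longrightarrow> (j,i) \<notin> D"
    proof (intro allI impI notI)
      fix i j assume eij: "e = {i,j}" and ji: "(j,i) \<in> D"
      have "i \<in> V" using EV e eij by blast
      moreover have "e \<in> A i" unfolding A_def using e eij ji by blast
      ultimately show False using nA by blast
    qed
    have "muG e = (if 0 < cE e then cE e else 0)"
      unfolding muG' using P1[OF cgG e] no D_def by blast
    moreover have "muH e = (if 0 < cE e then cE e else 0)"
      unfolding muH' using P1[OF cgH e] no DH by blast
    ultimately show "muG e = muH e" by simp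
  qed
  have Q2: "\<forall>i\<in>V. \<forall>e\<in>A i. \<forall>e'\<in>A i. muH e - muG e = muH e' - muG e'"
  proof (intro ballI)
    fix i e e' assume "i \<in> V" "e \<in> A i" "e' \<in> A i"
    then obtain a b where a: "e = {i,a}" "(a,i) \<in> D" and b: "e' = {i,b}" "(b,i) \<in> D"
      unfolding A_def by blast
    have "muG e = muG e'" unfolding muG' a(1) b(1)
      by (rule P2[OF cgG]) (use a b D_def in simp_all)
    moreover have "muH e = muH e'" unfolding muH' a(1) b(1)
      by (rule P2[OF cgH]) (use a b DH in simp_all)
    ultimately show "muH e - muG e = muH e' - muG e'" by simp
  qed
  have Q3: "\<forall>i\<in>V. A i \<noteq> {} \<longrightarrow> load E muG i = cVG i \<and> load E muH i = cVH i"
  proof (intro ballI impI)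
    fix i assume i: "i \<in> V" and ne: "A i \<noteq> {}"
    then obtain a where a: "(a,i) \<in> D" unfolding A_def by blast
    have "load E muG i = cVG i" unfolding muG' by (rule P3[OF cgG _ i]) (use a D_def in simp)
    moreover have "load E muH i = cVH i" unfolding muH' by (rule P3[OF cgH _ i]) (use a DH in simp)
    ultimately show "load E muG i = cVG i \<and> load E muH i = cVH i" by simp
  qed
  have "(\<Sum>i\<in>V. \<bar>(cVG i - load E muG i) - (cVH i - load E muH i)\<bar>) \<le> (\<Sum>i\<in>V. \<bar>cVG i - cVH i\<bar>)"
    by (rule comb[OF fV EV AE Q1 Q2 Q3])
  also have "\<dots> \<le> \<bar>cVG s - cVH s\<bar>"
  proof (cases "s \<in> V")
    case True
    have "(\<Sum>i\<in>V. \<bar>cVG i - cVH i\<bar>) = \<bar>cVG s - cVH s\<bar> + (\<Sum>i\<in>V - {s}. \<bar>cVG i - cVH i\<bar>)"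
      using sum.remove[OF fV True] by simp
    also have "(\<Sum>i\<in>V - {s}. \<bar>cVG i - cVH i\<bar>) = 0" using assms(3) by simp
    finally show ?thesis by simp
  next
    case False
    then have "(\<Sum>i\<in>V. \<bar>cVG i - cVH i\<bar>) = 0" using assms(3) by (metis (mono_tags, lifting) abs_zero diff_self sum.neutral)
    then show ?thesis by simp
  qed
  finally show ?thesis unfolding muG_def muH_def .
qed

end
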